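(* Let $m\in\mathbb{N}$, $m\geq2$, and $T:[0,1)\to[0,1)$, $T(x)=mx\bmod1$. Let $A\subset[0,1)$ be a nowhere dense set with $T(A)\subset A$. Then for every $t\in(0,1)$ that is normal in base $m$ and every integer $i\neq0$, $$A+it\subset\mathbb{Q}^c\quad\text{and}\quad \frac{A}{it}\subset\mathbb{Q}^c.$$
   Context: An $m$-adic expansion of $t\in(0,1)$ is a sequence $(t_k)\in\{0,\dots,m-1\}^{\mathbb{N}}$ with $t=\sum_{k\ge1}t_km^{-k}$. It is normal if for every finite nonempty word $\mathbf a$ over $\{0,\dots,m-1\}$, the limiting frequency of occurrences of $\mathbf a$ as a subword of $(t_k)$ equals $m^{-|\mathbf a|}$, where $|\mathbf a|$ is the length of $\mathbf a$; $t$ is normal (in base $m$) if it has a normal $m$-adic expansion. Notation: $A+it=\{x+it:x\in A\}$, $\frac{A}{it}=\{x/(it):x\in A\setminus\{0\}\}$. $\mathbb{Q}^c$ denotes the set of irrational real numbers. *)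

theory Defs
  imports "HOL-Analysis.Analysis"
begin

text \<open>An m-adic expansion of t: digits d 1, d 2, ... (index 0 unused), each < m,
  with t = sum over k >= 1 of d k / m^k.\<close>
definition m_adic_expansion :: "nat \<Rightarrow> (nat \<Rightarrow> nat) \<Rightarrow> real \<Rightarrow> bool" where
  "m_adic_expansion m d t \<longleftrightarrow>
     (\<forall>k\<ge>1. d k < m) \<and> (\<lambda>k. real (d (Suc k)) / real m ^ Suc k) sums t"

definition occurs_at :: "(nat \<Rightarrow> nat) \<Rightarrow> nat list \<Rightarrow> nat \<Rightarrow> bool" where
  "occurs_at d a k \<longleftrightarrow> (\<forall>j<length a. d (k + j) = a ! j)"

definition normal_expansion :: "nat \<Rightarrow> (nat \<Rightarrow> nat) \<Rightarrow> bool" where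
  "normal_expansion m d \<longleftrightarrow>
     (\<forall>a. a \<noteq> [] \<and> set a \<subseteq> {..<m} \<longrightarrow>
        (\<lambda>N. real (card {k \<in> {1..N}. occurs_at d a k}) / real N)
          \<longlonglongrightarrow> 1 / real m ^ length a)"

definition normal_in_base :: "nat \<Rightarrow> real \<Rightarrow> bool" where
  "normal_in_base m t \<longleftrightarrow> (\<exists>d. m_adic_expansion m d t \<and> normal_expansion m d)"

definition times_mod1 :: "nat \<Rightarrow> real \<Rightarrow> real" where
  "times_mod1 m x = frac (real m * x)"

definition nowhere_dense :: "real set \<Rightarrow> bool" where
  "nowhere_dense A \<longleftrightarrow> interior (closure A) = {}"

end

theory Submission
  imports Defs "HOL-Analysis.Analysis"
begin


lemma finite_union_interior:
  fixes F :: "nat \<Rightarrow> 'a::topological_space set"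
  assumes "\<And>k. k < D \<Longrightarrow> closed (F k)" "interior (\<Union>k<D. F k) \<noteq> {}"
  shows "\<exists>k<D. interior (F k) \<noteq> {}"
  using assms
proof (induction D)
  case 0 then show ?case by simp
next
  case (Suc D)
  show ?case
  proof (cases "interior (F D) = {}")
    case True
    have cl: "closed (\<Union>k<D. F k)" using Suc.prems by (intro closed_UN) auto
    have "(\<Union>k<Suc D. F k) = (\<Union>k<D. F k) \<union> F D" by (auto simp: lessThan_Suc)
    then have "interior (\<Union>k<Suc D. F k) = interior (\<Union>k<D. F k)"
      using interior_closed_Un_empty_interior[OF cl True] by simp
    then have "\<exists>k<D. interior (F k) \<noteq> {}" using Suc by auto
    then show ?thesis by auto
  next
    case False then show ?thesis by auto
  qed
qed

lemma frac_mult_frac: "frac (real m * frac y) = frac (real m * y)"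
proof -
  have "real m * frac y = real m * y + of_int (- (int m * \<lfloor>y\<rfloor>))"
    by (simp add: frac_def algebra_simps)
  then show ?thesis by (simp only: frac_add_of_int_right)
qed

lemma iter_times_mod1:
  assumes "x \<in> {0..<1}"
  shows "(times_mod1 m ^^ n) x = frac (real m ^ n * x)"
proof (induction n)
  case 0 then show ?case using assms by (simp add: frac_eq)
next
  case (Suc n)
  have "(times_mod1 m ^^ Suc n) x = frac (real m * frac (real m ^ n * x))"
    by (simp only: funpow.simps o_def Suc.IH) (simp add: times_mod1_def)
  also have "\<dots> = frac (real m ^ Suc n * x)" by (simp add: frac_mult_frac mult.assoc)
  finally show ?case .
qed

lemma orbit_in_A:
  assumes "times_mod1 m ` A \<subseteq> A" "x \<in> A"
  shows "(times_mod1 m ^^ n) x \<in> A"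
  using assms by (induction n) auto

fun digs :: "nat \<Rightarrow> nat \<Rightarrow> nat \<Rightarrow> nat list" where
  "digs m 0 j = []"
| "digs m (Suc L) j = (j div m ^ L) # digs m L (j mod m ^ L)"

lemma digs_len: "length (digs m L j) = L"
  by (induction L arbitrary: j) auto

lemma digs_lt: "m > 0 \<Longrightarrow> j < m ^ L \<Longrightarrow> set (digs m L j) \<subseteq> {..<m}"
proof (induction L arbitrary: j)
  case 0 then show ?case by simp
next
  case (Suc L)
  have "j div m ^ L < m" using Suc.prems by (simp add: less_mult_imp_div_less mult.commute)
  moreover have "j mod m ^ L < m ^ L" using Suc.prems by simp
  ultimately show ?case using Suc by auto
qed

lemma digs_val: "m > 0 \<Longrightarrow> j < m ^ L \<Longrightarrow>
  (\<Sum>l<L. real (digs m L j ! l) / real m ^ Suc l) = real j / real m ^ L"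
proof (induction L arbitrary: j)
  case 0 then show ?case by simp
next
  case (Suc L)
  have "(\<Sum>l<Suc L. real (digs m (Suc L) j ! l) / real m ^ Suc l)
      = real (j div m ^ L) / real m + (\<Sum>l<L. real (digs m L (j mod m ^ L) ! l) / real m ^ Suc (Suc l))"
    by (simp add: sum.lessThan_Suc_shift del: sum.lessThan_Suc)
  also have "(\<Sum>l<L. real (digs m L (j mod m ^ L) ! l) / real m ^ Suc (Suc l))
     = (\<Sum>l<L. real (digs m L (j mod m ^ L) ! l) / real m ^ Suc l) / real m"
    by (simp add: sum_divide_distrib field_simps)
  also have "\<dots> = real (j mod m ^ L) / real m ^ L / real m" using Suc by (simp add: Suc.IH)
  finally have e: "(\<Sum>l<Suc L. real (digs m (Suc L) j ! l) / real m ^ Suc l) =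
     real (j div m ^ L) / real m + real (j mod m ^ L) / real m ^ L / real m" .
  have "real j = real (j div m^L) * real m^L + real (j mod m^L)"
    by (metis of_nat_add of_nat_mult of_nat_power div_mult_mod_eq)
  then show ?case unfolding e using Suc.prems by (simp add: field_simps)
qed


lemma val_bounds:
  assumes m: "m \<ge> 2" and e: "\<And>k. e k < m"
  shows "summable (\<lambda>k. real (e k) / real m ^ Suc k)"
    and "0 \<le> (\<Sum>k. real (e k) / real m ^ Suc k)"
    and "(\<Sum>k. real (e k) / real m ^ Suc k) \<le> 1"
proof -
  have geo: "(\<lambda>k. (real m - 1) / real m * (1 / real m) ^ k) sums ((real m - 1) / real m * (1 / (1 - 1 / real m)))"
    using m by (intro sums_mult geometric_sums) auto
  have one: "(real m - 1) / real m * (1 / (1 - 1 / real m)) = 1" using m by (simp add: field_simps)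
  have le: "real (e k) / real m ^ Suc k \<le> (real m - 1) / real m * (1 / real m) ^ k" for k
  proof -
    have "e k \<le> m - 1" using e[of k] by linarith
    then have "real (e k) \<le> real (m - 1)" by linarith
    then have "real (e k) \<le> real m - 1" using m by (simp add: of_nat_diff)
    then have "real (e k) / real m ^ Suc k \<le> (real m - 1) / real m ^ Suc k"
      using m by (intro divide_right_mono) auto
    also have "(real m - 1) / real m ^ Suc k = (real m - 1) / real m * (1 / real m) ^ k"
      by (simp add: power_one_over)
    finally show ?thesis .
  qed
  show s: "summable (\<lambda>k. real (e k) / real m ^ Suc k)"
  proof (rule summable_comparison_test'[OF sums_summable[OF geo], of 0])
    fix k show "norm (real (e k) / real m ^ Suc k) \<le> (real m - 1) / real m * (1 / real m) ^ k"
      using le[of k] by simp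
  qed
  show "0 \<le> (\<Sum>k. real (e k) / real m ^ Suc k)" using s by (intro suminf_nonneg) auto
  have "(\<Sum>k. real (e k) / real m ^ Suc k) \<le> (\<Sum>k. (real m - 1) / real m * (1 / real m) ^ k)"
    by (rule suminf_le[OF le s sums_summable[OF geo]])
  then show "(\<Sum>k. real (e k) / real m ^ Suc k) \<le> 1" using sums_unique[OF geo] one by simp
qed

lemma val_split:
  assumes m: "m \<ge> 2" and e: "\<And>k. e k < m"
  shows "(\<Sum>k. real (e k) / real m ^ Suc k) =
     (\<Sum>k<L. real (e k) / real m ^ Suc k) + (\<Sum>k. real (e (k + L)) / real m ^ Suc k) / real m ^ L"
proof -
  have s: "summable (\<lambda>k. real (e k) / real m ^ Suc k)" using val_bounds(1)[OF m e] .
  have s2: "summable (\<lambda>k. real (e (k + L)) / real m ^ Suc k)" using val_bounds(1)[OF m, of "\<lambda>k. e (k + L)"] e by auto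
  have "(\<Sum>k. real (e k) / real m ^ Suc k) = (\<Sum>k. real (e (k + L)) / real m ^ Suc (k + L)) + (\<Sum>k<L. real (e k) / real m ^ Suc k)"
    using suminf_split_initial_segment[OF s, of L] by simp
  also have "(\<Sum>k. real (e (k + L)) / real m ^ Suc (k + L)) = (\<Sum>k. real (e (k + L)) / real m ^ Suc k / real m ^ L)"
    by (simp add: power_add field_simps)
  also have "\<dots> = (\<Sum>k. real (e (k + L)) / real m ^ Suc k) / real m ^ L"
    using suminf_divide[OF s2] by simp
  finally show ?thesis by simp
qed



definition tl_s :: "nat \<Rightarrow> (nat \<Rightarrow> nat) \<Rightarrow> nat \<Rightarrow> real" where
  "tl_s m d n = (\<Sum>k. real (d (n + 1 + k)) / real m ^ Suc k)"

lemma tl_bounds: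
  assumes m: "m \<ge> 2" and dg: "\<forall>k\<ge>1. d k < m"
  shows "0 \<le> tl_s m d n" "tl_s m d n \<le> 1"
  using val_bounds[OF m, of "\<lambda>k. d (n + 1 + k)"] dg unfolding tl_s_def by auto

lemma tl_shift:
  assumes m: "m \<ge> 2" and ex: "m_adic_expansion m d t"
  shows "\<exists>N::nat. real m ^ n * t = real N + tl_s m d n"
proof -
  define f where "f k = real (d (Suc k)) / real m ^ Suc k" for k
  have dg: "\<And>k. d (Suc k) < m" using ex unfolding m_adic_expansion_def by auto
  have fs: "f sums t" using ex unfolding m_adic_expansion_def f_def by auto
  have sf: "summable f" using fs by (simp add: sums_iff)
  have s2: "summable (\<lambda>k. real (d (n + 1 + k)) / real m ^ Suc k)"
    using val_bounds(1)[OF m, of "\<lambda>k. d (n + 1 + k)"] dg by auto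
  have "t = (\<Sum>k. f (k + n)) + (\<Sum>i<n. f i)"
    using suminf_split_initial_segment[OF sf, of n] sums_unique[OF fs] by simp
  also have "(\<Sum>k. f (k + n)) = (\<Sum>k. real (d (n + 1 + k)) / real m ^ Suc k / real m ^ n)"
    unfolding f_def by (simp add: power_add field_simps add.commute)
  also have "\<dots> = tl_s m d n / real m ^ n" unfolding tl_s_def using suminf_divide[OF s2] by simp
  finally have t: "t = tl_s m d n / real m ^ n + (\<Sum>i<n. f i)" .
  have "real m ^ n * (\<Sum>i<n. f i) = (\<Sum>i<n. real (d (Suc i) * m ^ (n - Suc i)))"
    unfolding sum_distrib_left
  proof (rule sum.cong)
    fix i assume "i \<in> {..<n}"
    then have "real m ^ (n - Suc i) = real m ^ n / real m ^ Suc i"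
      using m by (intro power_diff) auto
    then show "real m ^ n * f i = real (d (Suc i) * m ^ (n - Suc i))"
      unfolding f_def by simp
  qed simp
  then have "real m ^ n * t = real (\<Sum>i<n. d (Suc i) * m ^ (n - Suc i)) + tl_s m d n"
    unfolding t using m by (simp add: field_simps)
  then show ?thesis by blast
qed

lemma tl_occ:
  assumes m: "m \<ge> 2" and dg: "\<forall>k\<ge>1. d k < m" and j: "j < m ^ L"
    and occ: "occurs_at d (digs m L j) (n + 1)"
  shows "real j / real m ^ L \<le> tl_s m d n" "tl_s m d n \<le> (real j + 1) / real m ^ L"
proof -
  have e: "\<And>k. d (n + 1 + k) < m" using dg by auto
  have sp: "tl_s m d n = (\<Sum>k<L. real (d (n + 1 + k)) / real m ^ Suc k)
     + (\<Sum>k. real (d (n + 1 + (k + L))) / real m ^ Suc k) / real m ^ L"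
    unfolding tl_s_def using val_split[OF m, of "\<lambda>k. d (n + 1 + k)" L] e by simp
  have "(\<Sum>k<L. real (d (n + 1 + k)) / real m ^ Suc k) = (\<Sum>k<L. real (digs m L j ! k) / real m ^ Suc k)"
    using occ digs_len[of m L j] unfolding occurs_at_def by (intro sum.cong) auto
  also have "\<dots> = real j / real m ^ L" using digs_val[of m j L] j m by simp
  finally have sp2: "tl_s m d n = real j / real m ^ L + (\<Sum>k. real (d (n + 1 + (k + L))) / real m ^ Suc k) / real m ^ L"
    using sp by simp
  have b: "0 \<le> (\<Sum>k. real (d (n + 1 + (k + L))) / real m ^ Suc k)" "(\<Sum>k. real (d (n + 1 + (k + L))) / real m ^ Suc k) \<le> 1"
    using val_bounds(2,3)[OF m, of "\<lambda>k. d (n + 1 + (k + L))"] dg by auto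
  have mp: "real m ^ L > 0" using m by simp
  show "real j / real m ^ L \<le> tl_s m d n" unfolding sp2 using b mp by simp
  have "(\<Sum>k. real (d (n + 1 + (k + L))) / real m ^ Suc k) / real m ^ L \<le> 1 / real m ^ L"
    using b mp by (intro divide_right_mono) auto
  then show "tl_s m d n \<le> (real j + 1) / real m ^ L" unfolding sp2 by (simp add: add_divide_distrib)
qed


lemma tl_dense:
  assumes m: "m \<ge> 2" and ex: "m_adic_expansion m d t" and nm: "normal_expansion m d"
    and y: "0 < y" "y < 1" and ep: "0 < \<epsilon>"
  shows "\<exists>n. \<bar>tl_s m d n - y\<bar> < \<epsilon>"
proof -
  have dg: "\<forall>k\<ge>1. d k < m" using ex unfolding m_adic_expansion_def by auto
  have m1: "1 < real m" using m by simp
  obtain K where K: "1 / \<epsilon> < real m ^ K" using real_arch_pow[OF m1] by blast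
  define L where "L = Suc K"
  have mK: "real m ^ K > 0" using m by simp
  have mL: "real m ^ L > 0" using m by simp
  have "real m ^ K \<le> real m ^ L" unfolding L_def using m by (intro power_increasing) (auto simp del: power_Suc)
  then have "1 / real m ^ L \<le> 1 / real m ^ K" using mK mL by (intro divide_left_mono) auto
  also have "1 / real m ^ K < \<epsilon>" using K ep mK by (simp add: field_simps)
  finally have Lsmall: "1 / real m ^ L < \<epsilon>" .
  define j where "j = nat \<lfloor>y * real m ^ L\<rfloor>"
  have yj: "real j \<le> y * real m ^ L" "y * real m ^ L < real j + 1"
    unfolding j_def using y mL by (auto simp: of_nat_nat)
  have "y * real m ^ L < real m ^ L" using y mL by simp
  then have "real j < real (m ^ L)" using yj by (simp only: of_nat_power)
  then have jl: "j < m ^ L" by (simp only: of_nat_less_iff)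
  define w where "w = digs m L j"
  have wne: "w \<noteq> [] \<and> set w \<subseteq> {..<m}"
    using digs_len[of m L j] digs_lt[of m j L] jl m unfolding w_def L_def by auto
  have lim: "(\<lambda>N. real (card {k \<in> {1..N}. occurs_at d w k}) / real N) \<longlonglongrightarrow> 1 / real m ^ length w"
    using nm wne unfolding normal_expansion_def by blast
  have "0 < 1 / real m ^ length w" using m by simp
  from order_tendstoD(1)[OF lim this] obtain N where
    "0 < real (card {k \<in> {1..N}. occurs_at d w k}) / real N"
    unfolding eventually_sequentially by auto
  then have "card {k \<in> {1..N}. occurs_at d w k} \<noteq> 0" by (metis div_0 of_nat_0 less_irrefl)
  then have "{k \<in> {1..N}. occurs_at d w k} \<noteq> {}" by (metis card.empty)
  then obtain k where k: "k \<in> {1..N}" "occurs_at d w k" by blast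
  then have occ: "occurs_at d (digs m L j) ((k - 1) + 1)" unfolding w_def by simp
  have b1: "real j / real m ^ L \<le> tl_s m d (k - 1)" and b2: "tl_s m d (k - 1) \<le> (real j + 1) / real m ^ L"
    using tl_occ[OF m dg jl occ] by auto
  have c1: "real j / real m ^ L \<le> y" using yj mL by (simp add: field_simps)
  have c2: "y < (real j + 1) / real m ^ L" using yj mL by (simp add: field_simps)
  have "\<bar>tl_s m d (k - 1) - y\<bar> \<le> 1 / real m ^ L"
    using b1 b2 c1 c2 by (simp add: abs_le_iff add_divide_distrib)
  then have "\<bar>tl_s m d (k - 1) - y\<bar> < \<epsilon>" using Lsmall by linarith
  then show ?thesis by blast
qed



lemma key:
  assumes m: "m \<ge> 2" and A: "A \<subseteq> {0..<1}" and inv: "times_mod1 m ` A \<subseteq> A"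
    and nb: "normal_in_base m t" and x: "x \<in> A" and q: "q \<in> \<rat>" and r: "r \<in> \<rat>" "r \<noteq> 0"
    and xe: "x = q + r * t"
  shows "interior (closure A) \<noteq> {}"
proof -
  obtain d where ex: "m_adic_expansion m d t" and nm: "normal_expansion m d"
    using nb unfolding normal_in_base_def by blast
  define s where "s = tl_s m d"
  obtain a1 b1 where ab1: "b1 > 0" "q = of_int a1 / of_int b1" using Rats_cases'[OF q] by metis
  obtain a2 b2 where ab2: "b2 > 0" "r = of_int a2 / of_int b2" using Rats_cases'[OF r(1)] by metis
  define D where "D = b1 * b2"
  have Dp: "D > 0" unfolding D_def using ab1 ab2 by simp
  have Dq: "real_of_int D * q = of_int (a1 * b2)" unfolding D_def ab1 using ab1 by simp
  have Dr: "real_of_int D * r = of_int (a2 * b1)" unfolding D_def ab2 using ab2 by simp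
  have "\<forall>n. \<exists>N::nat. real m ^ n * t = real N + s n" using tl_shift[OF m ex] unfolding s_def by blast
  then obtain N :: "nat \<Rightarrow> nat" where N: "\<And>n. real m ^ n * t = real (N n) + s n" by metis
  define c where "c n = int m ^ n * (a1 * b2) + (a2 * b1) * int (N n)" for n
  define kk where "kk n = nat (c n mod D)" for n
  have kkD: "kk n < nat D" for n unfolding kk_def using Dp by simp
  have mx: "real m ^ n * x = of_int (c n div D) + real (kk n) / real_of_int D + r * s n" for n
  proof -
    have "real m ^ n * x = real m ^ n * q + r * real (N n) + r * s n"
    proof -
      have "real m ^ n * x = real m ^ n * q + r * (real m ^ n * t)" unfolding xe by (simp add: algebra_simps)
      then show ?thesis unfolding N by (simp add: algebra_simps)
    qed
    also have "real m ^ n * q + r * real (N n) = real_of_int (c n) / real_of_int D"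
    proof -
      have "real_of_int (c n) = real m ^ n * (real_of_int D * q) + (real_of_int D * r) * real (N n)"
        unfolding c_def Dq Dr by simp
      then show ?thesis using Dp by (simp add: field_simps)
    qed
    also have "real_of_int (c n) = real_of_int D * of_int (c n div D) + real (kk n)"
    proof -
      have "c n = D * (c n div D) + c n mod D" by simp
      moreover have "real (kk n) = real_of_int (c n mod D)" unfolding kk_def using Dp by simp
      ultimately show ?thesis by (metis of_int_add of_int_mult)
    qed
    finally show ?thesis using Dp by (simp add: field_simps)
  qed
  have orb: "frac (real m ^ n * x) \<in> A" for n
    using orbit_in_A[OF inv x, of n] iter_times_mod1[of x n m] x A by auto
  have dg: "\<forall>k\<ge>1. d k < m" using ex unfolding m_adic_expansion_def by auto
  define S where "S k = s ` {n. kk n = k}" for k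
  have dense: "{0<..<1} \<subseteq> closure (range s)"
  proof
    fix y :: real assume "y \<in> {0<..<1}"
    then show "y \<in> closure (range s)"
      unfolding closure_approachable dist_real_def s_def using tl_dense[OF m ex nm] by auto
  qed
  have "range s \<subseteq> (\<Union>k<nat D. closure (S k))"
  proof
    fix v assume "v \<in> range s"
    then obtain n where v: "v = s n" by auto
    then have "v \<in> S (kk n)" unfolding S_def by auto
    then have "v \<in> closure (S (kk n))" using closure_subset by blast
    then show "v \<in> (\<Union>k<nat D. closure (S k))" using kkD[of n] by blast
  qed
  then have "closure (range s) \<subseteq> (\<Union>k<nat D. closure (S k))"
    by (intro closure_minimal closed_UN) auto
  then have "{0<..<1} \<subseteq> (\<Union>k<nat D. closure (S k))" using dense by (intro order_trans[OF dense])
  then have "interior {0<..<1::real} \<subseteq> interior (\<Union>k<nat D. closure (S k))" by (rule interior_mono)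
  then have "interior (\<Union>k<nat D. closure (S k)) \<noteq> {}" by auto
  then obtain k where k: "k < nat D" "interior (closure (S k)) \<noteq> {}"
    using finite_union_interior[of "nat D" "\<lambda>k. closure (S k)"] by auto
  then obtain y where "y \<in> interior (closure (S k))" by auto
  then obtain \<delta> where dl: "\<delta> > 0" "ball y \<delta> \<subseteq> closure (S k)" unfolding mem_interior by auto
  define j0 where "j0 = \<lfloor>real k / real_of_int D + r * y\<rfloor>"
  define \<phi> where "\<phi> z = (real k / real_of_int D - of_int j0) + r * z" for z
  have inA: "{0<..<1} \<inter> \<phi> ` S k \<subseteq> A"
  proof
    fix w assume "w \<in> {0<..<1} \<inter> \<phi> ` S k"
    then obtain n where n: "kk n = k" "w = \<phi> (s n)" "0 < w" "w < 1" unfolding S_def by auto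
    have "real m ^ n * x = of_int (c n div D + j0) + \<phi> (s n)"
      unfolding mx \<phi>_def n(1) by simp
    then have "frac (real m ^ n * x) = frac (\<phi> (s n))" by (simp only: frac_add_of_int_left)
    also have "\<dots> = w" using n by (simp add: frac_eq)
    finally have "frac (real m ^ n * x) = w" .
    then show "w \<in> A" using orb by metis
  qed
  have contphi: "continuous_on UNIV \<phi>" unfolding \<phi>_def by (intro continuous_intros)
  have "\<phi> ` closure (S k) \<subseteq> closure (\<phi> ` S k)"
    by (rule image_closure_subset[OF continuous_on_subset[OF contphi]]) (use closure_subset[of "\<phi> ` S k"] in blast)+
  then have sub1: "\<phi> ` ball y \<delta> \<subseteq> closure (\<phi> ` S k)" using dl by auto
  have "{0<..<1} \<inter> closure (\<phi> ` S k) \<subseteq> closure ({0<..<1} \<inter> \<phi> ` S k)"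
    by (rule open_Int_closure_subset) simp
  also have "\<dots> \<subseteq> closure A" using inA by (rule closure_mono)
  finally have sub2: "{0<..<1} \<inter> \<phi> ` ball y \<delta> \<subseteq> closure A" using sub1 by auto
  have "open ((\<lambda>z. (real k / real_of_int D - of_int j0) + r *\<^sub>R z) ` ball y \<delta>)"
    by (rule open_affinity[OF open_ball r(2)])
  then have opU: "open (\<phi> ` ball y \<delta>)" unfolding \<phi>_def by simp
  have py: "0 \<le> \<phi> y" "\<phi> y < 1" unfolding \<phi>_def j0_def
    using floor_correct[of "real k / real_of_int D + r * y"] by linarith+
  have "\<phi> y \<in> \<phi> ` ball y \<delta>" using dl by simp
  then obtain \<epsilon> where ep: "\<epsilon> > 0" "ball (\<phi> y) \<epsilon> \<subseteq> \<phi> ` ball y \<delta>"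
    using opU open_contains_ball by blast
  define \<mu> where "\<mu> = min \<epsilon> (1 - \<phi> y)"
  define w where "w = \<phi> y + \<mu> / 2"
  have w: "0 < w" "w < 1" "w \<in> ball (\<phi> y) \<epsilon>"
  proof -
    have M: "0 < \<mu>" "\<mu> \<le> \<epsilon>" "\<mu> \<le> 1 - \<phi> y"
      using py ep unfolding \<mu>_def by auto
    show "0 < w" unfolding w_def using M py by linarith
    show "w < 1" unfolding w_def using M py by linarith
    have "dist (\<phi> y) w = \<mu> / 2" unfolding w_def dist_real_def using M by simp
    then show "w \<in> ball (\<phi> y) \<epsilon>" using M by simp
  qed
  have "open ({0<..<1} \<inter> \<phi> ` ball y \<delta>)" using opU by auto
  moreover have "w \<in> {0<..<1} \<inter> \<phi> ` ball y \<delta>" using w ep by auto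
  ultimately have "w \<in> interior (closure A)" using sub2 interior_maximal interior_open by blast
  then show ?thesis by auto
qed


theorem theorem4:
  fixes m :: nat and A :: "real set"
  assumes "m \<ge> 2"
    and "A \<subseteq> {0..<1}"
    and "nowhere_dense A"
    and "times_mod1 m ` A \<subseteq> A"
  shows "\<forall>t i. t \<in> {0<..<1} \<and> normal_in_base m t \<and> i \<noteq> (0::int) \<longrightarrow>
           (\<forall>x\<in>A. x + real_of_int i * t \<notin> \<rat>) \<and>
           (\<forall>x\<in>A - {0}. x / (real_of_int i * t) \<notin> \<rat>)"
proof (intro allI impI)
  fix t and i :: int
  assume H: "t \<in> {0<..<1} \<and> normal_in_base m t \<and> i \<noteq> 0"
  have nd: "interior (closure A) = {}" using assms(3) unfolding nowhere_dense_def .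
  show "(\<forall>x\<in>A. x + real_of_int i * t \<notin> \<rat>) \<and> (\<forall>x\<in>A - {0}. x / (real_of_int i * t) \<notin> \<rat>)"
  proof
    show "\<forall>x\<in>A. x + real_of_int i * t \<notin> \<rat>"
    proof (intro ballI notI)
      fix x assume x: "x \<in> A" and q: "x + real_of_int i * t \<in> \<rat>"
      have e: "x = (x + real_of_int i * t) + (- real_of_int i) * t" by simp
      have r: "- real_of_int i \<in> \<rat>" "- real_of_int i \<noteq> 0" using H by auto
      from key[OF assms(1,2,4) _ x q r e] H nd show False by auto
    qed
    show "\<forall>x\<in>A - {0}. x / (real_of_int i * t) \<notin> \<rat>"
    proof (intro ballI notI)
      fix x assume x: "x \<in> A - {0}" and q: "x / (real_of_int i * t) \<in> \<rat>"
      have it: "real_of_int i * t \<noteq> 0" using H by auto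
      have e: "x = 0 + (x / (real_of_int i * t) * real_of_int i) * t" using it by (simp add: field_simps)
      have r: "x / (real_of_int i * t) * real_of_int i \<in> \<rat>" using q by (intro Rats_mult) auto
      have r2: "x / (real_of_int i * t) * real_of_int i \<noteq> 0" using it x H by auto
      from key[OF assms(1,2,4) _ _ _ r r2 e] H nd x show False by auto
    qed
  qed
qed

end
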